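(* Let $(X_\lambda,x_\lambda)_{\lambda\in\Lambda}$ be a family of based, wep-connected spaces such that each $X_\lambda$ is locally path connected at $x_\lambda$ and $\{x_\lambda\}$ is closed in $X_\lambda$. Then the wedge $\bigvee_\lambda X_\lambda$ is wep-connected.
   Context: The wedge $\bigvee_\lambda X_\lambda$ is the quotient of the disjoint union $\bigsqcup_\lambda X_\lambda$ identifying all basepoints $x_\lambda$ to one point. For a space $Y$, $P(Y)$ is the space of paths $I=[0,1]\to Y$ with the compact-open topology. A path $p:I\to Y$ is well-ended (in $Y$) if for every open neighborhood $\mathcal U$ of $p$ in $P(Y)$ there are open neighborhoods $V_0,V_1$ of $p(0),p(1)$ in $Y$ such that for all $a\in V_0,b\in V_1$ there is $q\in\mathcal U$ with $q(0)=a$, $q(1)=b$. A space $Y$ is wep-connected if any two points of $Y$ are joined by a well-ended path in $Y$. *)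

theory Defs
  imports "HOL-Analysis.Analysis"
begin

definition quotient_topology :: "'a topology \<Rightarrow> ('a \<Rightarrow> 'b) \<Rightarrow> 'b topology" where
  "quotient_topology X f =
     topology (\<lambda>U. U \<subseteq> f ` topspace X \<and> openin X {x \<in> topspace X. f x \<in> U})"

definition wedge_map :: "('i \<Rightarrow> 'a) \<Rightarrow> 'i \<times> 'a \<Rightarrow> ('i \<times> 'a) option" where
  "wedge_map x = (\<lambda>(i, y). if y = x i then None else Some (i, y))"

definition wedge :: "('i \<Rightarrow> 'a topology) \<Rightarrow> ('i \<Rightarrow> 'a) \<Rightarrow> 'i set \<Rightarrow> ('i \<times> 'a) option topology" where
  "wedge X x I = quotient_topology (sum_topology X I) (wedge_map x)"

definition path_space :: "'a topology \<Rightarrow> (real \<Rightarrow> 'a) topology" where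
  "path_space Y = topology_generated_by
     {{p. pathin Y p \<and> p ` K \<subseteq> U} | K U.
        compactin (top_of_set {0..1}) K \<and> openin Y U}"

definition well_ended :: "'a topology \<Rightarrow> (real \<Rightarrow> 'a) \<Rightarrow> bool" where
  "well_ended Y p \<longleftrightarrow> pathin Y p \<and>
     (\<forall>\<U>. openin (path_space Y) \<U> \<and> p \<in> \<U> \<longrightarrow>
        (\<exists>V0 V1. openin Y V0 \<and> p 0 \<in> V0 \<and> openin Y V1 \<and> p 1 \<in> V1 \<and>
           (\<forall>a\<in>V0. \<forall>b\<in>V1. \<exists>q\<in>\<U>. q 0 = a \<and> q 1 = b)))"

definition wep_connected :: "'a topology \<Rightarrow> bool" where
  "wep_connected Y \<longleftrightarrow>
     (\<forall>a\<in>topspace Y. \<forall>b\<in>topspace Y. \<exists>p. well_ended Y p \<and> p 0 = a \<and> p 1 = b)"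

end

theory Submission
  imports Defs
begin

definition jn :: "(real \<Rightarrow> 'a) \<Rightarrow> (real \<Rightarrow> 'a) \<Rightarrow> real \<Rightarrow> 'a" (infixr "+!+" 75) where
  "g +!+ h = (\<lambda>x. if x \<le> 1/2 then g (2 * x) else h (2 * x - 1))"

definition rv :: "(real \<Rightarrow> 'a) \<Rightarrow> real \<Rightarrow> 'a" where
  "rv g = (\<lambda>x. g (1 - x))"

lemma istop_quot: "istopology (\<lambda>U. U \<subseteq> f ` topspace X \<and> openin X {x \<in> topspace X. f x \<in> U})"
proof -
  have 1: "{x \<in> topspace X. f x \<in> S \<inter> T} = {x \<in> topspace X. f x \<in> S} \<inter> {x \<in> topspace X. f x \<in> T}" for S T by auto
  have 2: "{x \<in> topspace X. f x \<in> \<Union>K} = (\<Union>k\<in>K. {x \<in> topspace X. f x \<in> k})" for K by auto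
  have I: "S \<inter> T \<subseteq> f ` topspace X \<and> openin X {x \<in> topspace X. f x \<in> S \<inter> T}"
    if "S \<subseteq> f ` topspace X \<and> openin X {x \<in> topspace X. f x \<in> S}"
      "T \<subseteq> f ` topspace X \<and> openin X {x \<in> topspace X. f x \<in> T}" for S T
  proof -
    have "openin X ({x \<in> topspace X. f x \<in> S} \<inter> {x \<in> topspace X. f x \<in> T})"
      using that by (intro openin_Int) auto
    then show ?thesis using that by (simp only: 1) blast
  qed
  have U: "\<Union>K \<subseteq> f ` topspace X \<and> openin X {x \<in> topspace X. f x \<in> \<Union>K}"
    if a: "\<forall>S\<in>K. S \<subseteq> f ` topspace X \<and> openin X {x \<in> topspace X. f x \<in> S}" for K
  proof -
    have "openin X (\<Union>k\<in>K. {x \<in> topspace X. f x \<in> k})" using a by (intro openin_Union) blast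
    with a show ?thesis by (simp only: 2) blast
  qed
  show ?thesis unfolding istopology_def using I U by blast
qed

lemma openin_quot: "openin (quotient_topology X f) U \<longleftrightarrow> U \<subseteq> f ` topspace X \<and> openin X {x \<in> topspace X. f x \<in> U}"
  unfolding quotient_topology_def by (simp add: topology_inverse'[OF istop_quot])

lemma topspace_quot: "topspace (quotient_topology X f) = f ` topspace X"
proof -
  have e: "{x \<in> topspace X. f x \<in> f ` topspace X} = topspace X" by auto
  have "openin (quotient_topology X f) (f ` topspace X)"
    unfolding openin_quot e by simp
  hence "f ` topspace X \<subseteq> topspace (quotient_topology X f)" by (rule openin_subset)
  moreover have "topspace (quotient_topology X f) \<subseteq> f ` topspace X"
    using openin_quot[of X f "topspace (quotient_topology X f)"] by simp
  ultimately show ?thesis by blast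
qed

lemma topspace_path_space: "topspace (path_space Y) = {p. pathin Y p}"
proof -
  have "compactin (top_of_set {0..1}) ({}::real set)" by simp
  then have "{p. pathin Y p} \<subseteq> \<Union>{{p. pathin Y p \<and> p ` K \<subseteq> U} | K U.
        compactin (top_of_set {0..1}) K \<and> openin Y U}"
    by blast
  then show ?thesis unfolding path_space_def topology_generated_by_topspace by blast
qed

lemma openin_path_space_sub:
  "compactin (top_of_set {0..1}) K \<Longrightarrow> openin Y U \<Longrightarrow> openin (path_space Y) {p. pathin Y p \<and> p ` K \<subseteq> U}"
  unfolding path_space_def by (rule topology_generated_by_Basis) blast

lemma openin_path_space_pathin: "openin (path_space Y) S \<Longrightarrow> p \<in> S \<Longrightarrow> pathin Y p"
  using openin_subset topspace_path_space by fastforce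

lemma path_space_pullback:
  assumes P: "\<And>q. pathin Y q \<Longrightarrow> pathin Z (\<Phi> q)"
  and B: "\<And>K U. compactin (top_of_set {0..1}) K \<Longrightarrow> openin Z U \<Longrightarrow> openin (path_space Y) {q. pathin Y q \<and> \<Phi> q ` K \<subseteq> U}"
  and S: "openin (path_space Z) S"
  shows "openin (path_space Y) {q. pathin Y q \<and> \<Phi> q \<in> S}"
proof -
  have "generate_topology_on {{p. pathin Z p \<and> p ` K \<subseteq> U} | K U.
        compactin (top_of_set {0..1}) K \<and> openin Z U} S"
    using S unfolding path_space_def by (simp add: openin_topology_generated_by_iff)
  then show ?thesis
  proof (induction rule: generate_topology_on.induct)
    case Empty
    then show ?case by simp
  next
    case (Int a b)
    have "{q. pathin Y q \<and> \<Phi> q \<in> a \<inter> b} = {q. pathin Y q \<and> \<Phi> q \<in> a} \<inter> {q. pathin Y q \<and> \<Phi> q \<in> b}" by blast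
    then show ?case using Int by (simp add: openin_Int)
  next
    case (UN K)
    have "{q. pathin Y q \<and> \<Phi> q \<in> \<Union>K} = (\<Union>k\<in>K. {q. pathin Y q \<and> \<Phi> q \<in> k})" by blast
    moreover have "openin (path_space Y) (\<Union>k\<in>K. {q. pathin Y q \<and> \<Phi> q \<in> k})"
      using UN by (intro openin_Union) auto
    ultimately show ?case by simp
  next
    case (Basis s)
    then obtain K U where s: "s = {p. pathin Z p \<and> p ` K \<subseteq> U}" and KU: "compactin (top_of_set {0..1}) K" "openin Z U"
      by blast
    have "{q. pathin Y q \<and> \<Phi> q \<in> s} = {q. pathin Y q \<and> \<Phi> q ` K \<subseteq> U}" using P s by blast
    then show ?case using B[OF KU] by simp
  qed
qed

lemma compactin_unit_iff: "compactin (top_of_set {0..1}) K \<longleftrightarrow> compact K \<and> K \<subseteq> {0..(1::real)}"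
  by (simp add: compactin_subtopology)

lemma path_space_pushforward:
  assumes f: "continuous_map Y Z f" and S: "openin (path_space Z) S"
  shows "openin (path_space Y) {q. pathin Y q \<and> f \<circ> q \<in> S}"
proof (rule path_space_pullback[OF _ _ S])
  show "pathin Z (f \<circ> q)" if "pathin Y q" for q using that f by (rule pathin_compose)
  fix K :: "real set" and U assume K: "compactin (top_of_set {0..1}) K" and U: "openin Z U"
  have "{q. pathin Y q \<and> (f \<circ> q) ` K \<subseteq> U} = {q. pathin Y q \<and> q ` K \<subseteq> {y \<in> topspace Y. f y \<in> U}}"
  proof -
    have "q ` K \<subseteq> topspace Y" if "pathin Y q" for q
      using path_image_subset_topspace[OF that] K unfolding compactin_unit_iff by blast
    then show ?thesis by auto
  qed
  moreover have "openin Y {y \<in> topspace Y. f y \<in> U}" using f U by (rule openin_continuous_map_preimage)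
  ultimately show "openin (path_space Y) {q. pathin Y q \<and> (f \<circ> q) ` K \<subseteq> U}"
    using openin_path_space_sub[OF K] by simp
qed

lemma pathin_rv: "pathin Y q \<Longrightarrow> pathin Y (rv q)"
proof -
  assume q: "pathin Y q"
  have "continuous_map (top_of_set {0..1}) (top_of_set {0..1}) (\<lambda>t::real. 1 - t)"
    by (auto intro!: continuous_intros)
  then have "pathin Y (q \<circ> (\<lambda>t. 1 - t))" using q unfolding pathin_def by (rule continuous_map_compose)
  then show ?thesis by (simp add: rv_def o_def)
qed

lemma path_space_reverse:
  assumes S: "openin (path_space Y) S"
  shows "openin (path_space Y) {q. pathin Y q \<and> rv q \<in> S}"
proof (rule path_space_pullback[OF _ _ S])
  show "pathin Y (rv q)" if "pathin Y q" for q using that by (rule pathin_rv)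
  fix K :: "real set" and U assume K: "compactin (top_of_set {0..1}) K" and U: "openin Y U"
  let ?K = "(\<lambda>t. 1 - t) ` K"
  have "compact ?K" using K unfolding compactin_unit_iff
    by (intro compact_continuous_image) (auto intro!: continuous_intros)
  moreover have "?K \<subseteq> {0..1}" using K unfolding compactin_unit_iff by auto
  ultimately have K': "compactin (top_of_set {0..1}) ?K" unfolding compactin_unit_iff by simp
  have "rv q ` K = q ` ?K" for q :: "real \<Rightarrow> 'a" by (auto simp: rv_def image_iff)
  then show "openin (path_space Y) {q. pathin Y q \<and> rv q ` K \<subseteq> U}"
    using openin_path_space_sub[OF K' U] by simp
qed

lemma pathin_join:
  assumes g: "pathin Y g" and h: "pathin Y h" and gh: "g 1 = h 0"
  shows "pathin Y (g +!+ h)"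
proof -
  have "continuous_map (top_of_set {0..1}) Y (\<lambda>x. if (\<lambda>x. x) x \<le> (\<lambda>x. 1/2) x then g (2*x) else h (2*x - 1))"
  proof (rule continuous_map_cases_le)
    show "continuous_map (top_of_set {0..1}) euclideanreal (\<lambda>x. x)" by simp
    show "continuous_map (top_of_set {0..1}) euclideanreal (\<lambda>x. 1/2)" by simp
    show "continuous_map (subtopology (top_of_set {0..1}) {x \<in> topspace (top_of_set {0..1}). x \<le> 1/2}) Y (\<lambda>x. g (2*x))"
    proof -
      have "continuous_map (subtopology (top_of_set {0..1}) {x \<in> topspace (top_of_set {0..1}). x \<le> 1/2}) (top_of_set {0..1}) (\<lambda>x::real. 2*x)"
        by (auto simp: subtopology_subtopology intro!: continuous_intros)
      then have "continuous_map (subtopology (top_of_set {0..1}) {x \<in> topspace (top_of_set {0..1}). x \<le> 1/2}) Y (g \<circ> (\<lambda>x::real. 2*x))"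
        using g unfolding pathin_def by (rule continuous_map_compose)
      then show ?thesis by (simp add: o_def)
    qed
    show "continuous_map (subtopology (top_of_set {0..1}) {x \<in> topspace (top_of_set {0..1}). 1/2 \<le> x}) Y (\<lambda>x. h (2*x - 1))"
    proof -
      have "continuous_map (subtopology (top_of_set {0..1}) {x \<in> topspace (top_of_set {0..1}). 1/2 \<le> x}) (top_of_set {0..1}) (\<lambda>x::real. 2*x - 1)"
        by (auto simp: subtopology_subtopology intro!: continuous_intros)
      then have "continuous_map (subtopology (top_of_set {0..1}) {x \<in> topspace (top_of_set {0..1}). 1/2 \<le> x}) Y (h \<circ> (\<lambda>x::real. 2*x - 1))"
        using h unfolding pathin_def by (rule continuous_map_compose)
      then show ?thesis by (simp add: o_def)
    qed
  next
    fix x assume "x = (1/2::real)"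
    then have "2*x = 1" "2*x - 1 = 0" by simp_all
    then show "g (2*x) = h (2*x - 1)" using gh by simp
  qed
  then show ?thesis unfolding pathin_def jn_def by simp
qed

lemma join_image: "(g +!+ h) ` {0..1} \<subseteq> g ` {0..1} \<union> h ` {0..1}"
proof
  fix u assume "u \<in> (g +!+ h) ` {0..1}"
  then obtain t where t: "t \<in> {0..1}" "u = (g +!+ h) t" by blast
  show "u \<in> g ` {0..1} \<union> h ` {0..1}"
  proof (cases "t \<le> 1/2")
    case True
    then have "2*t \<in> {0..1}" "u = g (2*t)" using t by (auto simp: jn_def)
    then show ?thesis by blast
  next
    case False
    then have "2*t-1 \<in> {0..1}" "u = h (2*t-1)" using t by (auto simp: jn_def)
    then show ?thesis by blast
  qed
qed

lemma join_open:
  assumes S: "openin (path_space Y) S"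
  shows "\<forall>p r. pathin Y p \<longrightarrow> pathin Y r \<longrightarrow> p 1 = r 0 \<longrightarrow> p +!+ r \<in> S \<longrightarrow>
     (\<exists>A C. openin (path_space Y) A \<and> openin (path_space Y) C \<and> p \<in> A \<and> r \<in> C \<and>
        (\<forall>q\<in>A. \<forall>s\<in>C. q 1 = s 0 \<longrightarrow> q +!+ s \<in> S))"
proof -
  have "generate_topology_on {{p. pathin Y p \<and> p ` K \<subseteq> U} | K U.
        compactin (top_of_set {0..1}) K \<and> openin Y U} S"
    using S unfolding path_space_def by (simp add: openin_topology_generated_by_iff)
  then show ?thesis
  proof (induction rule: generate_topology_on.induct)
    case Empty
    then show ?case by simp
  next
    case (Int a b)
    show ?case
    proof (intro allI impI)
      fix p r assume h: "pathin Y p" "pathin Y r" "p 1 = r 0" "p +!+ r \<in> a \<inter> b"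
      obtain A1 C1 where 1: "openin (path_space Y) A1" "openin (path_space Y) C1" "p \<in> A1" "r \<in> C1"
          "\<forall>q\<in>A1. \<forall>s\<in>C1. q 1 = s 0 \<longrightarrow> q +!+ s \<in> a"
        using Int.IH(1)[rule_format, OF h(1) h(2) h(3)] h(4) by blast
      obtain A2 C2 where 2: "openin (path_space Y) A2" "openin (path_space Y) C2" "p \<in> A2" "r \<in> C2"
          "\<forall>q\<in>A2. \<forall>s\<in>C2. q 1 = s 0 \<longrightarrow> q +!+ s \<in> b"
        using Int.IH(2)[rule_format, OF h(1) h(2) h(3)] h(4) by blast
      show "\<exists>A C. openin (path_space Y) A \<and> openin (path_space Y) C \<and> p \<in> A \<and> r \<in> C \<and>
        (\<forall>q\<in>A. \<forall>s\<in>C. q 1 = s 0 \<longrightarrow> q +!+ s \<in> a \<inter> b)"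
      proof (intro exI conjI)
        show "openin (path_space Y) (A1 \<inter> A2)" using 1 2 by (simp add: openin_Int)
        show "openin (path_space Y) (C1 \<inter> C2)" using 1 2 by (simp add: openin_Int)
        show "p \<in> A1 \<inter> A2" "r \<in> C1 \<inter> C2" using 1 2 by auto
        show "\<forall>q\<in>A1 \<inter> A2. \<forall>s\<in>C1 \<inter> C2. q 1 = s 0 \<longrightarrow> q +!+ s \<in> a \<inter> b" using 1(5) 2(5) by blast
      qed
    qed
  next
    case (UN K)
    show ?case
    proof (intro allI impI)
      fix p r assume h: "pathin Y p" "pathin Y r" "p 1 = r 0" "p +!+ r \<in> \<Union>K"
      then obtain k where k: "k \<in> K" "p +!+ r \<in> k" by blast
      obtain A C where 1: "openin (path_space Y) A" "openin (path_space Y) C" "p \<in> A" "r \<in> C"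
          "\<forall>q\<in>A. \<forall>s\<in>C. q 1 = s 0 \<longrightarrow> q +!+ s \<in> k"
        using UN.IH[OF k(1), rule_format, OF h(1) h(2) h(3) k(2)] by blast
      then show "\<exists>A C. openin (path_space Y) A \<and> openin (path_space Y) C \<and> p \<in> A \<and> r \<in> C \<and>
        (\<forall>q\<in>A. \<forall>s\<in>C. q 1 = s 0 \<longrightarrow> q +!+ s \<in> \<Union>K)" using k by blast
    qed
  next
    case (Basis s)
    then obtain K U where s: "s = {p. pathin Y p \<and> p ` K \<subseteq> U}" and K: "compactin (top_of_set {0..1}) K"
      and U: "openin Y U"
      by blast
    have Kc: "compact K" and K01: "K \<subseteq> {0..1}" using K unfolding compactin_unit_iff by auto
    define K1 where "K1 = (\<lambda>t. 2*t) ` (K \<inter> {0..1/2})"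
    define K2 where "K2 = (\<lambda>t. 2*t - 1) ` (K \<inter> {1/2..1})"
    have "compact K1" unfolding K1_def
      by (intro compact_continuous_image compact_Int_closed Kc) (auto intro!: continuous_intros)
    moreover have "K1 \<subseteq> {0..1}" unfolding K1_def using K01 by auto
    ultimately have K1c: "compactin (top_of_set {0..1}) K1" unfolding compactin_unit_iff by simp
    have "compact K2" unfolding K2_def
      by (intro compact_continuous_image compact_Int_closed Kc) (auto intro!: continuous_intros)
    moreover have "K2 \<subseteq> {0..1}" unfolding K2_def using K01 by auto
    ultimately have K2c: "compactin (top_of_set {0..1}) K2" unfolding compactin_unit_iff by simp
    show ?case
    proof (intro allI impI)
      fix p r assume h: "pathin Y p" "pathin Y r" "p 1 = r 0" "p +!+ r \<in> s"
      then have pr: "(p +!+ r) ` K \<subseteq> U" using s by blast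
      have pK1: "p ` K1 \<subseteq> U"
      proof
        fix u assume "u \<in> p ` K1"
        then obtain t where t: "t \<in> K" "t \<le> 1/2" "u = p (2*t)" unfolding K1_def by auto
        then have "u = (p +!+ r) t" by (simp add: jn_def)
        then show "u \<in> U" using pr t by blast
      qed
      have rK2: "r ` K2 \<subseteq> U"
      proof
        fix u assume "u \<in> r ` K2"
        then obtain t where t: "t \<in> K" "1/2 \<le> t" "u = r (2*t - 1)" unfolding K2_def by auto
        have "u = (p +!+ r) t"
        proof (cases "t = 1/2")
          case True
          then have "2*t = 1" "2*t - 1 = 0" by simp_all
          then show ?thesis using t h(3) by (simp add: jn_def)
        next
          case False
          then show ?thesis using t by (simp add: jn_def)
        qed
        then show "u \<in> U" using pr t by blast
      qed
      have J: "q +!+ s' \<in> s" if q: "pathin Y q" "q ` K1 \<subseteq> U" and s': "pathin Y s'" "s' ` K2 \<subseteq> U"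
        and qs: "q 1 = s' 0" for q s'
      proof -
        have "(q +!+ s') ` K \<subseteq> U"
        proof
          fix u assume "u \<in> (q +!+ s') ` K"
          then obtain t where t: "t \<in> K" "u = (q +!+ s') t" by blast
          show "u \<in> U"
          proof (cases "t \<le> 1/2")
            case True
            then have "2*t \<in> K1" unfolding K1_def using t K01 by (intro image_eqI[where x=t]) auto
            then show ?thesis using t True q by (auto simp: jn_def)
          next
            case False
            then have "2*t - 1 \<in> K2" unfolding K2_def using t K01 by (intro image_eqI[where x=t]) auto
            then show ?thesis using t False s' by (auto simp: jn_def)
          qed
        qed
        then show ?thesis using s pathin_join[OF q(1) s'(1) qs] by blast
      qed
      show "\<exists>A C. openin (path_space Y) A \<and> openin (path_space Y) C \<and> p \<in> A \<and> r \<in> C \<and>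
        (\<forall>q\<in>A. \<forall>s'\<in>C. q 1 = s' 0 \<longrightarrow> q +!+ s' \<in> s)"
      proof (intro exI conjI)
        show "openin (path_space Y) {p. pathin Y p \<and> p ` K1 \<subseteq> U}" by (rule openin_path_space_sub[OF K1c U])
        show "openin (path_space Y) {p. pathin Y p \<and> p ` K2 \<subseteq> U}" by (rule openin_path_space_sub[OF K2c U])
        show "p \<in> {p. pathin Y p \<and> p ` K1 \<subseteq> U}" using h(1) pK1 by blast
        show "r \<in> {p. pathin Y p \<and> p ` K2 \<subseteq> U}" using h(2) rK2 by blast
        show "\<forall>q\<in>{p. pathin Y p \<and> p ` K1 \<subseteq> U}. \<forall>s'\<in>{p. pathin Y p \<and> p ` K2 \<subseteq> U}. q 1 = s' 0 \<longrightarrow> q +!+ s' \<in> s"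
          using J by blast
      qed
    qed
  qed
qed

definition left_we :: "'a topology \<Rightarrow> (real \<Rightarrow> 'a) \<Rightarrow> bool" where
  "left_we Y p \<longleftrightarrow> pathin Y p \<and>
     (\<forall>U. openin (path_space Y) U \<and> p \<in> U \<longrightarrow>
        (\<exists>V0. openin Y V0 \<and> p 0 \<in> V0 \<and> (\<forall>a\<in>V0. \<exists>q\<in>U. q 0 = a \<and> q 1 = p 1)))"

lemma WE_left: "well_ended Y p \<Longrightarrow> left_we Y p"
  unfolding well_ended_def left_we_def by meson

lemma WE_rev:
  assumes p: "well_ended Y p" shows "well_ended Y (rv p)"
  unfolding well_ended_def
proof (intro conjI allI impI)
  show "pathin Y (rv p)" using p unfolding well_ended_def by (simp add: pathin_rv)
  fix U assume U: "openin (path_space Y) U \<and> rv p \<in> U"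
  let ?U = "{q. pathin Y q \<and> rv q \<in> U}"
  have "openin (path_space Y) ?U" using U path_space_reverse by blast
  moreover have "p \<in> ?U" using U p unfolding well_ended_def by simp
  ultimately obtain V0 V1 where V: "openin Y V0" "p 0 \<in> V0" "openin Y V1" "p 1 \<in> V1"
     "\<forall>a\<in>V0. \<forall>b\<in>V1. \<exists>q\<in>?U. q 0 = a \<and> q 1 = b"
    using p unfolding well_ended_def by blast
  show "\<exists>V0 V1. openin Y V0 \<and> rv p 0 \<in> V0 \<and> openin Y V1 \<and> rv p 1 \<in> V1 \<and>
           (\<forall>a\<in>V0. \<forall>b\<in>V1. \<exists>q\<in>U. q 0 = a \<and> q 1 = b)"
  proof (intro exI conjI ballI)
    show "openin Y V1" "openin Y V0" using V by auto
    show "rv p 0 \<in> V1" "rv p 1 \<in> V0" using V by (auto simp: rv_def)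
    fix a b assume "a \<in> V1" "b \<in> V0"
    then obtain q where "q \<in> ?U" "q 0 = b" "q 1 = a" using V(5) by blast
    then show "\<exists>q\<in>U. q 0 = a \<and> q 1 = b"
      by (intro bexI[of _ "rv q"]) (auto simp: rv_def)
  qed
qed

lemma WE_join:
  assumes p: "left_we Y p" and r: "well_ended Y r" and pr: "p 1 = r 0"
  shows "well_ended Y (p +!+ r)"
  unfolding well_ended_def
proof (intro conjI allI impI)
  have pp: "pathin Y p" and rp: "pathin Y r" using p r unfolding left_we_def well_ended_def by auto
  show "pathin Y (p +!+ r)" using pathin_join[OF pp rp pr] .
  fix U assume U: "openin (path_space Y) U \<and> p +!+ r \<in> U"
  obtain A C where AC: "openin (path_space Y) A" "openin (path_space Y) C" "p \<in> A" "r \<in> C"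
        "\<forall>q\<in>A. \<forall>s\<in>C. q 1 = s 0 \<longrightarrow> q +!+ s \<in> U"
    using join_open[of Y U] U pp rp pr by blast
  obtain V0 where V0: "openin Y V0" "p 0 \<in> V0" "\<forall>a\<in>V0. \<exists>q\<in>A. q 0 = a \<and> q 1 = p 1"
    using p AC unfolding left_we_def by blast
  obtain W0 W1 where W: "openin Y W0" "r 0 \<in> W0" "openin Y W1" "r 1 \<in> W1"
     "\<forall>a\<in>W0. \<forall>b\<in>W1. \<exists>q\<in>C. q 0 = a \<and> q 1 = b"
    using r AC unfolding well_ended_def by blast
  show "\<exists>V0 V1. openin Y V0 \<and> (p +!+ r) 0 \<in> V0 \<and> openin Y V1 \<and> (p +!+ r) 1 \<in> V1 \<and>
           (\<forall>a\<in>V0. \<forall>b\<in>V1. \<exists>q\<in>U. q 0 = a \<and> q 1 = b)"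
  proof (intro exI conjI ballI)
    show "openin Y V0" "openin Y W1" using V0 W by auto
    show "(p +!+ r) 0 \<in> V0" "(p +!+ r) 1 \<in> W1" using V0 W by (auto simp: jn_def)
    fix a b assume a: "a \<in> V0" and b: "b \<in> W1"
    obtain q where q: "q \<in> A" "q 0 = a" "q 1 = p 1" using V0(3) a by blast
    obtain s where s: "s \<in> C" "s 0 = p 1" "s 1 = b" using W(5) W(2) b pr by force
    have "q +!+ s \<in> U" using AC(5) q s by simp
    moreover have "(q +!+ s) 0 = a" "(q +!+ s) 1 = b" using q s by (auto simp: jn_def)
    ultimately show "\<exists>q\<in>U. q 0 = a \<and> q 1 = b" by blast
  qed
qed

lemma const_open:
  assumes S: "openin (path_space Y) S" and c: "c \<in> topspace Y"
  shows "(\<lambda>_. c) \<in> S \<longrightarrow> (\<exists>N. openin Y N \<and> c \<in> N \<and> (\<forall>q. pathin Y q \<and> q ` {0..1} \<subseteq> N \<longrightarrow> q \<in> S))"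
proof -
  have "generate_topology_on {{p. pathin Y p \<and> p ` K \<subseteq> U} | K U.
        compactin (top_of_set {0..1}) K \<and> openin Y U} S"
    using S unfolding path_space_def by (simp add: openin_topology_generated_by_iff)
  then show ?thesis
  proof (induction rule: generate_topology_on.induct)
    case Empty
    then show ?case by simp
  next
    case (Int a b)
    show ?case
    proof
      assume h: "(\<lambda>_. c) \<in> a \<inter> b"
      obtain N1 where 1: "openin Y N1" "c \<in> N1" "\<forall>q. pathin Y q \<and> q ` {0..1} \<subseteq> N1 \<longrightarrow> q \<in> a"
        using Int.IH(1) h by blast
      obtain N2 where 2: "openin Y N2" "c \<in> N2" "\<forall>q. pathin Y q \<and> q ` {0..1} \<subseteq> N2 \<longrightarrow> q \<in> b"
        using Int.IH(2) h by blast
      show "\<exists>N. openin Y N \<and> c \<in> N \<and> (\<forall>q. pathin Y q \<and> q ` {0..1} \<subseteq> N \<longrightarrow> q \<in> a \<inter> b)"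
      proof (intro exI conjI allI impI)
        show "openin Y (N1 \<inter> N2)" using 1 2 by (simp add: openin_Int)
        show "c \<in> N1 \<inter> N2" using 1 2 by simp
        fix q assume "pathin Y q \<and> q ` {0..1} \<subseteq> N1 \<inter> N2"
        then show "q \<in> a \<inter> b" using 1(3) 2(3) by blast
      qed
    qed
  next
    case (UN K)
    show ?case
    proof
      assume "(\<lambda>_. c) \<in> \<Union>K"
      then obtain k where k: "k \<in> K" "(\<lambda>_. c) \<in> k" by blast
      obtain N where "openin Y N" "c \<in> N" "\<forall>q. pathin Y q \<and> q ` {0..1} \<subseteq> N \<longrightarrow> q \<in> k"
        using UN.IH[OF k(1)] k(2) by blast
      then show "\<exists>N. openin Y N \<and> c \<in> N \<and> (\<forall>q. pathin Y q \<and> q ` {0..1} \<subseteq> N \<longrightarrow> q \<in> \<Union>K)"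
        using k(1) by blast
    qed
  next
    case (Basis s)
    then obtain K U where s: "s = {p. pathin Y p \<and> p ` K \<subseteq> U}" and K: "compactin (top_of_set {0..1}) K"
      and U: "openin Y U"
      by blast
    have K01: "K \<subseteq> {0..1}" using K unfolding compactin_unit_iff by auto
    show ?case
    proof
      assume h: "(\<lambda>_. c) \<in> s"
      show "\<exists>N. openin Y N \<and> c \<in> N \<and> (\<forall>q. pathin Y q \<and> q ` {0..1} \<subseteq> N \<longrightarrow> q \<in> s)"
      proof (cases "K = {}")
        case True
        show ?thesis
          by (rule exI[of _ "topspace Y"]) (use c s True in auto)
      next
        case False
        then have "c \<in> U" using h s by auto
        show ?thesis
        proof (rule exI[of _ U], intro conjI allI impI)
          fix q assume "pathin Y q \<and> q ` {0..1} \<subseteq> U"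
          then show "q \<in> s" using s K01 by blast
        qed (use U \<open>c \<in> U\<close> in auto)
      qed
    qed
  qed
qed

lemma WE_const:
  assumes c: "c \<in> topspace Y"
    and loc: "\<And>N. openin Y N \<Longrightarrow> c \<in> N \<Longrightarrow> \<exists>V. openin Y V \<and> c \<in> V \<and>
          (\<forall>a\<in>V. \<exists>g. pathin Y g \<and> g ` {0..1} \<subseteq> N \<and> g 0 = a \<and> g 1 = c)"
  shows "well_ended Y (\<lambda>_. c)"
  unfolding well_ended_def
proof (intro conjI allI impI)
  show "pathin Y (\<lambda>_. c)" using c by simp
  fix U assume U: "openin (path_space Y) U \<and> (\<lambda>_. c) \<in> U"
  then obtain N where N: "openin Y N" "c \<in> N" "\<forall>q. pathin Y q \<and> q ` {0..1} \<subseteq> N \<longrightarrow> q \<in> U"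
    using const_open[of Y U c] c by blast
  obtain V where V: "openin Y V" "c \<in> V" "\<forall>a\<in>V. \<exists>g. pathin Y g \<and> g ` {0..1} \<subseteq> N \<and> g 0 = a \<and> g 1 = c"
    using loc[OF N(1,2)] by blast
  show "\<exists>V0 V1. openin Y V0 \<and> c \<in> V0 \<and> openin Y V1 \<and> c \<in> V1 \<and>
           (\<forall>a\<in>V0. \<forall>b\<in>V1. \<exists>q\<in>U. q 0 = a \<and> q 1 = b)"
  proof (rule exI[of _ V], rule exI[of _ V], intro conjI ballI)
    fix a b assume "a \<in> V" "b \<in> V"
    then obtain g h where g: "pathin Y g" "g ` {0..1} \<subseteq> N" "g 0 = a" "g 1 = c"
      and h: "pathin Y h" "h ` {0..1} \<subseteq> N" "h 0 = b" "h 1 = c"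
      using V(3) by meson
    let ?q = "g +!+ rv h"
    have "pathin Y ?q" using g h by (intro pathin_join pathin_rv) (auto simp: rv_def)
    moreover have "rv h ` {0..1} \<subseteq> N" using h(2) by (auto simp: rv_def)
    then have "?q ` {0..1} \<subseteq> N" using join_image[of g "rv h"] g(2) by blast
    ultimately have "?q \<in> U" using N(3) by blast
    moreover have "?q 0 = a" "?q 1 = b" using g h by (auto simp: jn_def rv_def)
    ultimately show "\<exists>q\<in>U. q 0 = a \<and> q 1 = b" by blast
  qed (use V in auto)
qed

lemma wedge_map_eq: "wedge_map x (l, y) = (if y = x l then None else Some (l, y))"
  by (simp add: wedge_map_def)

lemma topspace_wedge: "topspace (wedge X x \<Lambda>) = wedge_map x ` Sigma \<Lambda> (topspace \<circ> X)"
  unfolding wedge_def topspace_quot by simp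

lemma openin_wedge:
  "openin (wedge X x \<Lambda>) U \<longleftrightarrow> U \<subseteq> topspace (wedge X x \<Lambda>) \<and>
     (\<forall>l\<in>\<Lambda>. openin (X l) {y \<in> topspace (X l). wedge_map x (l, y) \<in> U})"
proof -
  have e: "\<And>l. l \<in> \<Lambda> \<Longrightarrow> {y. (l, y) \<in> {z \<in> Sigma \<Lambda> (topspace \<circ> X). wedge_map x z \<in> U}} =
      {y \<in> topspace (X l). wedge_map x (l, y) \<in> U}" by auto
  show ?thesis
    unfolding topspace_wedge unfolding wedge_def openin_quot openin_sum_topology topspace_sum_topology
    using e by auto
qed

lemma cont_wedge_incl:
  assumes "l \<in> \<Lambda>"
  shows "continuous_map (X l) (wedge X x \<Lambda>) (\<lambda>y. wedge_map x (l, y))"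
  unfolding continuous_map_def
proof (intro conjI allI impI)
  show "(\<lambda>y. wedge_map x (l, y)) \<in> topspace (X l) \<rightarrow> topspace (wedge X x \<Lambda>)"
    unfolding topspace_wedge using assms by auto
  fix U assume "openin (wedge X x \<Lambda>) U"
  then show "openin (X l) {y \<in> topspace (X l). wedge_map x (l, y) \<in> U}"
    using assms unfolding openin_wedge by blast
qed

lemma push_left_we:
  assumes l: "l \<in> \<Lambda>" and p: "well_ended (X l) p" and p0: "p 0 \<noteq> x l" and p1: "p 1 = x l"
    and cl: "closedin (X l) {x l}"
  shows "left_we (wedge X x \<Lambda>) ((\<lambda>y. wedge_map x (l, y)) \<circ> p)"
  unfolding left_we_def
proof (intro conjI allI impI)
  let ?W = "wedge X x \<Lambda>" and ?i = "\<lambda>y. wedge_map x (l, y)"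
  have ct: "continuous_map (X l) ?W ?i" by (rule cont_wedge_incl[OF l])
  have pp: "pathin (X l) p" using p unfolding well_ended_def by simp
  show "pathin ?W (?i \<circ> p)" using pp ct by (rule pathin_compose)
  fix U assume U: "openin (path_space ?W) U \<and> ?i \<circ> p \<in> U"
  let ?U = "{q. pathin (X l) q \<and> ?i \<circ> q \<in> U}"
  have "openin (path_space (X l)) ?U" using path_space_pushforward[OF ct] U by blast
  moreover have "p \<in> ?U" using U pp by simp
  ultimately obtain V0 V1 where V: "openin (X l) V0" "p 0 \<in> V0" "openin (X l) V1" "p 1 \<in> V1"
     "\<forall>a\<in>V0. \<forall>b\<in>V1. \<exists>q\<in>?U. q 0 = a \<and> q 1 = b"
    using p unfolding well_ended_def by blast
  let ?V = "?i ` (V0 - {x l})"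
  have V0t: "V0 \<subseteq> topspace (X l)" using V(1) by (rule openin_subset)
  have pre: "{y \<in> topspace (X m). wedge_map x (m, y) \<in> ?V} = (if m = l then V0 - {x l} else {})" for m
    using V0t by (auto simp: wedge_map_eq split: if_splits)
  have "openin ?W ?V"
    unfolding openin_wedge
  proof (intro conjI ballI)
    show "?V \<subseteq> topspace ?W" unfolding topspace_wedge using V0t l by auto
    fix m assume "m \<in> \<Lambda>"
    show "openin (X m) {y \<in> topspace (X m). wedge_map x (m, y) \<in> ?V}"
      unfolding pre using openin_diff[OF V(1) cl] by simp
  qed
  then show "\<exists>V0. openin ?W V0 \<and> (?i \<circ> p) 0 \<in> V0 \<and> (\<forall>a\<in>V0. \<exists>q\<in>U. q 0 = a \<and> q 1 = (?i \<circ> p) 1)"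
  proof (intro exI conjI ballI)
    show "(?i \<circ> p) 0 \<in> ?V" using V(2) p0 by auto
    fix a assume "a \<in> ?V"
    then obtain v where v: "v \<in> V0" "a = ?i v" by blast
    obtain q where q: "q \<in> ?U" "q 0 = v" "q 1 = x l" using V(5) v(1) V(4) p1 by force
    show "\<exists>q\<in>U. q 0 = a \<and> q 1 = (?i \<circ> p) 1"
      by (rule bexI[of _ "?i \<circ> q"]) (use q v p1 in auto)
  qed
qed

theorem lemma4p21:
  fixes X :: "'i \<Rightarrow> 'a topology" and x :: "'i \<Rightarrow> 'a" and \<Lambda> :: "'i set"
  assumes "\<And>l. l \<in> \<Lambda> \<Longrightarrow> x l \<in> topspace (X l)"
    and "\<And>l. l \<in> \<Lambda> \<Longrightarrow> wep_connected (X l)"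
    and "\<And>l. l \<in> \<Lambda> \<Longrightarrow> locally_path_connected_at (x l) (X l)"
    and "\<And>l. l \<in> \<Lambda> \<Longrightarrow> closedin (X l) {x l}"
  shows "wep_connected (wedge X x \<Lambda>)"
proof -
  let ?W = "wedge X x \<Lambda>" and ?i = "\<lambda>l y. wedge_map x (l, y)"
  note xt = assms(1) and wep = assms(2) and lpc = assms(3) and cl = assms(4)
  have loc: "\<exists>V. openin ?W V \<and> None \<in> V \<and>
          (\<forall>a\<in>V. \<exists>g. pathin ?W g \<and> g ` {0..1} \<subseteq> N \<and> g 0 = a \<and> g 1 = None)"
    if N: "openin ?W N" "None \<in> N" and nt: "None \<in> topspace ?W" for N
  proof -
    have Nl: "openin (X l) {y \<in> topspace (X l). ?i l y \<in> N} \<and> x l \<in> {y \<in> topspace (X l). ?i l y \<in> N}"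
      if "l \<in> \<Lambda>" for l
    proof
      show "openin (X l) {y \<in> topspace (X l). ?i l y \<in> N}" using N(1) that unfolding openin_wedge by blast
      show "x l \<in> {y \<in> topspace (X l). ?i l y \<in> N}" using N(2) xt[OF that] by (simp add: wedge_map_eq)
    qed
    have "\<forall>l\<in>\<Lambda>. \<exists>V. openin (X l) V \<and> path_connectedin (X l) V \<and> x l \<in> V \<and> V \<subseteq> {y \<in> topspace (X l). ?i l y \<in> N}"
    proof
      fix l assume l: "l \<in> \<Lambda>"
      show "\<exists>V. openin (X l) V \<and> path_connectedin (X l) V \<and> x l \<in> V \<and> V \<subseteq> {y \<in> topspace (X l). ?i l y \<in> N}"
      proof -
        have nb: "neighbourhood_base_at (x l) (\<lambda>U. openin (X l) U \<and> path_connectedin (X l) U) (X l)"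
          using lpc[OF l] unfolding locally_path_connected_at_def .
        obtain U V where "openin (X l) U" "openin (X l) V \<and> path_connectedin (X l) V" "x l \<in> U" "U \<subseteq> V"
            "V \<subseteq> {y \<in> topspace (X l). ?i l y \<in> N}"
          using nb[unfolded neighbourhood_base_at_def, rule_format, OF Nl[OF l]] by blast
        then show ?thesis by blast
      qed
    qed
    from bchoice[OF this] obtain Vf where Vf0: "\<forall>l\<in>\<Lambda>. openin (X l) (Vf l) \<and> path_connectedin (X l) (Vf l) \<and> x l \<in> Vf l \<and>
        Vf l \<subseteq> {y \<in> topspace (X l). ?i l y \<in> N}"
      by blast
    then have Vf: "\<And>l. l \<in> \<Lambda> \<Longrightarrow> openin (X l) (Vf l) \<and> path_connectedin (X l) (Vf l) \<and> x l \<in> Vf l \<and>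
        Vf l \<subseteq> {y \<in> topspace (X l). ?i l y \<in> N}"
      by blast
    let ?V = "\<Union>l\<in>\<Lambda>. ?i l ` Vf l"
    have Vft: "Vf l \<subseteq> topspace (X l)" if "l \<in> \<Lambda>" for l using Vf[OF that] openin_subset by blast
    have pre: "{y \<in> topspace (X m). ?i m y \<in> ?V} = Vf m" if m: "m \<in> \<Lambda>" for m
    proof
      show "Vf m \<subseteq> {y \<in> topspace (X m). ?i m y \<in> ?V}" using Vft[OF m] m by blast
      show "{y \<in> topspace (X m). ?i m y \<in> ?V} \<subseteq> Vf m"
      proof
        fix y assume "y \<in> {y \<in> topspace (X m). ?i m y \<in> ?V}"
        then obtain l v where lv: "l \<in> \<Lambda>" "v \<in> Vf l" "?i m y = ?i l v" by blast
        show "y \<in> Vf m"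
        proof (cases "y = x m")
          case True
          then show ?thesis using Vf[OF m] by simp
        next
          case False
          then show ?thesis using lv by (auto simp: wedge_map_eq split: if_splits)
        qed
      qed
    qed
    obtain l0 where l0: "l0 \<in> \<Lambda>" using nt unfolding topspace_wedge by auto
    have Vo: "openin ?W ?V" unfolding openin_wedge
      proof (intro conjI ballI)
        show "?V \<subseteq> topspace ?W" unfolding topspace_wedge using Vft by fastforce
        fix m assume m: "m \<in> \<Lambda>"
        show "openin (X m) {y \<in> topspace (X m). ?i m y \<in> ?V}" unfolding pre[OF m] using Vf[OF m] by blast
      qed
    have "?i l0 (x l0) = None" by (simp add: wedge_map_eq)
    then have Vn: "None \<in> ?V" using Vf[OF l0] l0 by force
    have Vp: "\<exists>g. pathin ?W g \<and> g ` {0..1} \<subseteq> N \<and> g 0 = a \<and> g 1 = None" if "a \<in> ?V" for a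
    proof -
      from that obtain l v where lv: "l \<in> \<Lambda>" "v \<in> Vf l" "a = ?i l v" by blast
      obtain g where g: "pathin (X l) g" "g \<in> {0..1} \<rightarrow> Vf l" "g 0 = v" "g 1 = x l"
        using Vf[OF lv(1)] lv(2) unfolding path_connectedin by blast
      show "\<exists>g. pathin ?W g \<and> g ` {0..1} \<subseteq> N \<and> g 0 = a \<and> g 1 = None"
      proof (rule exI[of _ "?i l \<circ> g"], intro conjI)
        show "pathin ?W (?i l \<circ> g)" using g(1) cont_wedge_incl[OF lv(1)] by (rule pathin_compose)
        show "(?i l \<circ> g) ` {0..1} \<subseteq> N" using g(2) Vf[OF lv(1)] by auto
        show "(?i l \<circ> g) 0 = a" "(?i l \<circ> g) 1 = None" using g lv by (auto simp: wedge_map_eq)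
      qed
    qed
    show ?thesis using Vo Vn Vp by blast
  qed
  have toNone: "\<exists>P. well_ended ?W P \<and> P 0 = a \<and> P 1 = None" if a: "a \<in> topspace ?W" for a
  proof -
    obtain l y where ly: "l \<in> \<Lambda>" "y \<in> topspace (X l)" "a = ?i l y" using a unfolding topspace_wedge by auto
    have nt: "None \<in> topspace ?W" unfolding topspace_wedge using ly xt
      by (auto simp: image_iff wedge_map_eq intro!: bexI[of _ "(l, x l)"])
    have cWE: "well_ended ?W (\<lambda>_. None)"
      by (rule WE_const[OF nt]) (use loc nt in blast)
    show ?thesis
    proof (cases "y = x l")
      case True
      then have "a = None" using ly by (simp add: wedge_map_eq)
      then show ?thesis using cWE by auto
    next
      case False
      obtain p where p: "well_ended (X l) p" "p 0 = y" "p 1 = x l"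
        using wep[OF ly(1)] ly(2) xt[OF ly(1)] unfolding wep_connected_def by blast
      have lw: "left_we ?W (?i l \<circ> p)"
        by (rule push_left_we[where X=X and x=x and \<Lambda>=\<Lambda> and l=l and p=p, OF ly(1) p(1)]) (use p False cl ly in auto)
      have "well_ended ?W ((?i l \<circ> p) +!+ (\<lambda>_. None))"
        by (rule WE_join[OF lw cWE]) (use p in \<open>simp add: wedge_map_eq\<close>)
      moreover have "((?i l \<circ> p) +!+ (\<lambda>_. None)) 0 = a" "((?i l \<circ> p) +!+ (\<lambda>_. None)) 1 = None"
        using p ly by (auto simp: jn_def)
      ultimately show ?thesis by blast
    qed
  qed
  show ?thesis
    unfolding wep_connected_def
  proof (intro ballI)
    fix a b assume a: "a \<in> topspace ?W" and b: "b \<in> topspace ?W"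
    obtain Pa where Pa: "well_ended ?W Pa" "Pa 0 = a" "Pa 1 = None" using toNone[OF a] by blast
    obtain Pb where Pb: "well_ended ?W Pb" "Pb 0 = b" "Pb 1 = None" using toNone[OF b] by blast
    have "well_ended ?W (Pa +!+ rv Pb)"
      by (rule WE_join[OF WE_left[OF Pa(1)] WE_rev[OF Pb(1)]]) (use Pa Pb in \<open>simp add: rv_def\<close>)
    moreover have "(Pa +!+ rv Pb) 0 = a" "(Pa +!+ rv Pb) 1 = b" using Pa Pb by (auto simp: jn_def rv_def)
    ultimately show "\<exists>p. well_ended ?W p \<and> p 0 = a \<and> p 1 = b" by blast
  qed
qed

end
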